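(* Let $A^+,A^-\in\mathbb{R}_{\max}^{m\times n}$, $C\in\mathbb{R}_{\max}^{p\times n}$, $\mu^+\in\mathbb{Z}_{\ge0}^p$, $\mu^-\in\mathbb{Z}_{\ge0}^n$ satisfy the standing assumptions below, and let $f$ and $S$ be as defined below. If $x\in S\cap\mathbb{R}^n$ is not a local optimum, then there exist $J\subset[n]$ and $\delta'>0$ such that $x+\delta\chi_J\in S$ and $f(x+\delta\chi_J)<f(x)$ for all $0<\delta<\delta'$.
   Context: $\mathbb{R}_{\max}=\mathbb{R}\cup\{-\infty\}$, $[n]=\{1,\dots,n\}$, and $\chi_J\in\{0,1\}^n$ is the indicator vector of $J$. Write $A^\pm=(a^\pm_{i,j})$, $C=(c_{k,j})$, and $A=(a_{i,j})$ with $a_{i,j}=\max(a^+_{i,j},a^-_{i,j})$. The objective is $f(x)=\sum_{k=1}^p\mu^+_k\max_{j\in[n]}(c_{k,j}+x_j)-\sum_{j=1}^n\mu^-_jx_j$, and the feasible set is $S=\{x\in\mathbb{R}_{\max}^n:\max_j(a^+_{i,j}+x_j)\ge\max_j(a^-_{i,j}+x_j)\text{ for all }i\in[m]\}$. Standing assumptions: every row of $A$ and of $C$ contains a finite entry; $\sum_{k}\mu^+_k=\sum_j\mu^-_j$; the undirected graph with vertex set $\{u_1,\dots,u_p\}\cup[n]\cup\{w_1,\dots,w_m\}$ and edges $\{u_k,j\}$ for $c_{k,j}\ne-\infty$ and $\{w_i,j\}$ for $a_{i,j}\ne-\infty$ is connected. A point $x\in S\cap\mathbb{R}^n$ is a local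 optimum if there is $\delta>0$ such that $f(y)\ge f(x)$ for all $y\in S\cap\mathbb{R}^n$ with $\max_j|x_j-y_j|<\delta$. *)

theory Defs
  imports "HOL-Analysis.Analysis" "HOL-Library.Extended_Real"
begin

text \<open>Tropical (max-plus) data: elements of R_max = R \<union> {-\<infinity>} are represented as
  extended reals different from +\<infinity>. Matrices are functions nat \<Rightarrow> nat \<Rightarrow> ereal,
  indices 0..<m, 0..<n, 0..<p (0-based instead of 1-based). Real vectors are nat \<Rightarrow> real,
  only coordinates j < n matter.\<close>

definition in_Rmax :: "ereal \<Rightarrow> bool" where
  "in_Rmax a \<longleftrightarrow> a \<noteq> PInfty"

definition trow :: "nat \<Rightarrow> (nat \<Rightarrow> nat \<Rightarrow> ereal) \<Rightarrow> nat \<Rightarrow> (nat \<Rightarrow> real) \<Rightarrow> ereal" where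
  "trow n M i x = Max ((\<lambda>j. M i j + ereal (x j)) ` {..<n})"

definition inS :: "nat \<Rightarrow> nat \<Rightarrow> (nat \<Rightarrow> nat \<Rightarrow> ereal) \<Rightarrow> (nat \<Rightarrow> nat \<Rightarrow> ereal)
    \<Rightarrow> (nat \<Rightarrow> real) \<Rightarrow> bool" where
  "inS m n Ap Am x \<longleftrightarrow> (\<forall>i<m. trow n Ap i x \<ge> trow n Am i x)"

definition fobj :: "nat \<Rightarrow> nat \<Rightarrow> (nat \<Rightarrow> nat \<Rightarrow> ereal) \<Rightarrow> (nat \<Rightarrow> nat) \<Rightarrow> (nat \<Rightarrow> nat)
    \<Rightarrow> (nat \<Rightarrow> real) \<Rightarrow> ereal" where
  "fobj p n C mup mum x =
     (\<Sum>k<p. ereal (real (mup k)) * trow n C k x) - ereal (\<Sum>j<n. real (mum j) * x j)"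

definition Amax :: "(nat \<Rightarrow> nat \<Rightarrow> ereal) \<Rightarrow> (nat \<Rightarrow> nat \<Rightarrow> ereal) \<Rightarrow> nat \<Rightarrow> nat \<Rightarrow> ereal" where
  "Amax Ap Am i j = max (Ap i j) (Am i j)"

text \<open>The bipartite graph: vertices Inl (Inl k) = u_k (k<p), Inl (Inr j) = j (j<n),
  Inr i = w_i (i<m).\<close>
definition gvert :: "nat \<Rightarrow> nat \<Rightarrow> nat \<Rightarrow> ((nat + nat) + nat) set" where
  "gvert m n p = (Inl \<circ> Inl) ` {..<p} \<union> (Inl \<circ> Inr) ` {..<n} \<union> Inr ` {..<m}"

definition gedge :: "nat \<Rightarrow> nat \<Rightarrow> nat \<Rightarrow> (nat \<Rightarrow> nat \<Rightarrow> ereal) \<Rightarrow> (nat \<Rightarrow> nat \<Rightarrow> ereal)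
    \<Rightarrow> ((nat + nat) + nat) \<Rightarrow> ((nat + nat) + nat) \<Rightarrow> bool" where
  "gedge m n p C A v w \<longleftrightarrow>
     (\<exists>k<p. \<exists>j<n. C k j \<noteq> MInfty \<and>
        ({v, w} = {Inl (Inl k), Inl (Inr j)})) \<or>
     (\<exists>i<m. \<exists>j<n. A i j \<noteq> MInfty \<and>
        ({v, w} = {Inr i, Inl (Inr j)}))"

definition graph_connected :: "nat \<Rightarrow> nat \<Rightarrow> nat \<Rightarrow> (nat \<Rightarrow> nat \<Rightarrow> ereal)
    \<Rightarrow> (nat \<Rightarrow> nat \<Rightarrow> ereal) \<Rightarrow> bool" where
  "graph_connected m n p C A \<longleftrightarrow>
     (\<forall>v\<in>gvert m n p. \<forall>w\<in>gvert m n p. (gedge m n p C A)\<^sup>*\<^sup>* v w)"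

definition local_opt :: "nat \<Rightarrow> nat \<Rightarrow> nat \<Rightarrow> (nat \<Rightarrow> nat \<Rightarrow> ereal) \<Rightarrow> (nat \<Rightarrow> nat \<Rightarrow> ereal)
    \<Rightarrow> (nat \<Rightarrow> nat \<Rightarrow> ereal) \<Rightarrow> (nat \<Rightarrow> nat) \<Rightarrow> (nat \<Rightarrow> nat) \<Rightarrow> (nat \<Rightarrow> real) \<Rightarrow> bool" where
  "local_opt m n p Ap Am C mup mum x \<longleftrightarrow>
     (\<exists>\<delta>>0. \<forall>y. inS m n Ap Am y \<and> (\<forall>j<n. \<bar>x j - y j\<bar> < \<delta>) \<longrightarrow>
        fobj p n C mup mum y \<ge> fobj p n C mup mum x)"

definition chi :: "nat set \<Rightarrow> nat \<Rightarrow> real" where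
  "chi J j = (if j \<in> J then 1 else 0)"

end

theory Submission imports Defs begin

definition hmax :: "nat set \<Rightarrow> (nat \<Rightarrow> real) \<Rightarrow> real" where
  "hmax Q d = Max (d ` Q)"

lemma hmax_ge: "finite Q \<Longrightarrow> j \<in> Q \<Longrightarrow> d j \<le> hmax Q d"
  unfolding hmax_def by simp

lemma hmax_in: "finite Q \<Longrightarrow> Q \<noteq> {} \<Longrightarrow> \<exists>j\<in>Q. hmax Q d = d j"
proof -
  assume "finite Q" "Q \<noteq> {}"
  then have "Max (d ` Q) \<in> d ` Q" by (intro Max_in) auto
  then show ?thesis unfolding hmax_def by auto
qed

lemma hmax_eqI: "finite Q \<Longrightarrow> j \<in> Q \<Longrightarrow> (\<forall>i\<in>Q. d i \<le> d j) \<Longrightarrow> hmax Q d = d j"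
  unfolding hmax_def by (intro Max_eqI) auto

lemma hmax_cong: "(\<forall>j\<in>Q. d j = d' j) \<Longrightarrow> hmax Q d = hmax Q d'"
  unfolding hmax_def by (metis image_cong)

lemma hmax_scale:
  assumes "finite Q" "Q \<noteq> {}" "0 \<le> c"
  shows "hmax Q (\<lambda>j. c * d j) = c * hmax Q d"
proof -
  obtain j where j: "j \<in> Q" "hmax Q d = d j" using hmax_in[OF assms(1,2)] by blast
  have "hmax Q (\<lambda>j. c * d j) = c * d j"
    using hmax_eqI[OF assms(1) j(1), of "\<lambda>j. c * d j"] hmax_ge[OF assms(1), of _ d] j assms(3)
    by (simp add: mult_left_mono)
  then show ?thesis using j by simp
qed

lemma hmax_bound:
  assumes "finite Q" "Q \<noteq> {}" "\<forall>j\<in>Q. \<bar>d j\<bar> < e"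
  shows "\<bar>hmax Q d\<bar> < e"
  using hmax_in[OF assms(1,2), of d] assms(3) by auto

lemma chi_thresh:
  assumes "finite Q" "Q \<noteq> {}" "Q \<subseteq> {..<n}"
  shows "hmax Q (chi {j. j<n \<and> t \<le> d j}) = (if t \<le> hmax Q d then 1 else 0)"
proof (cases "t \<le> hmax Q d")
  case True
  obtain j where j: "j \<in> Q" "hmax Q d = d j" using hmax_in[OF assms(1,2)] by blast
  have "hmax Q (chi {j. j<n \<and> t \<le> d j}) = chi {j. j<n \<and> t \<le> d j} j"
    by (rule hmax_eqI[OF assms(1) j(1)]) (use j True assms(3) in \<open>auto simp: chi_def\<close>)
  then show ?thesis using j True assms(3) by (auto simp: chi_def)
next
  case False
  have z: "\<forall>i\<in>Q. chi {j. j<n \<and> t \<le> d j} i = 0"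
    using False hmax_ge[OF assms(1), of _ d] by (force simp: chi_def)
  obtain j where j: "j \<in> Q" "hmax Q (chi {j. j<n \<and> t \<le> d j}) = chi {j. j<n \<and> t \<le> d j} j"
    using hmax_in[OF assms(1,2)] by blast
  then show ?thesis using z False by simp
qed

lemma fin_min_pos:
  assumes "finite B" "\<forall>j\<in>B. \<exists>e>0. P j e" "\<forall>j e e'. P j e \<longrightarrow> 0 < e' \<longrightarrow> e' \<le> e \<longrightarrow> P j e'"
  shows "\<exists>e>(0::real). \<forall>j\<in>B. P j e"
  using assms(1,2)
proof (induction B rule: finite_induct)
  case empty
  then show ?case by (intro exI[of _ 1]) auto
next
  case (insert a F)
  obtain e1 where e1: "e1 > 0" "\<forall>j\<in>F. P j e1" using insert by auto
  obtain e2 where e2: "e2 > 0" "P a e2" using insert by auto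
  show ?case
    by (rule exI[of _ "min e1 e2"]) (use e1 e2 assms(3) in \<open>auto\<close>)
qed

definition Gf :: "nat \<Rightarrow> nat \<Rightarrow> (nat \<Rightarrow> nat set) \<Rightarrow> (nat \<Rightarrow> nat) \<Rightarrow> (nat \<Rightarrow> nat) \<Rightarrow> (nat \<Rightarrow> real) \<Rightarrow> real" where
  "Gf p n Q mup mum d = (\<Sum>k<p. real (mup k) * hmax (Q k) d) - (\<Sum>j<n. real (mum j) * d j)"

lemma Gf_decomp:
  assumes "\<forall>k<p. hmax (Q k) d = hmax (Q k) d' + c * hmax (Q k) e"
    and "\<forall>j<n. d j = d' j + c * e j"
  shows "Gf p n Q mup mum d = Gf p n Q mup mum d' + c * Gf p n Q mup mum e"
proof -
  have 1: "(\<Sum>k<p. real (mup k) * hmax (Q k) d) = (\<Sum>k<p. real (mup k) * hmax (Q k) d' + c * (real (mup k) * hmax (Q k) e))"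
    by (rule sum.cong) (auto simp: assms algebra_simps)
  have 2: "(\<Sum>j<n. real (mum j) * d j) = (\<Sum>j<n. real (mum j) * d' j + c * (real (mum j) * e j))"
    by (rule sum.cong) (auto simp: assms algebra_simps)
  show ?thesis unfolding Gf_def 1 2 by (simp add: sum.distrib sum_distrib_left[symmetric] algebra_simps)
qed

lemma level_lemma:
  assumes Q: "\<forall>k<p. Q k \<noteq> {} \<and> Q k \<subseteq> {..<n}"
    and mu: "(\<Sum>k<p. mup k) = (\<Sum>j<n. mum j)"
    and n: "n > 0"
  shows "Gf p n Q mup mum d < 0 \<Longrightarrow> \<exists>t\<in>d ` {..<n}. Gf p n Q mup mum (chi {j. j<n \<and> t \<le> d j}) < 0"
proof (induction "card (d ` {..<n})" arbitrary: d rule: less_induct)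
  case less
  define V where "V = d ` {..<n}"
  have fV: "finite V" and neV: "V \<noteq> {}" using n by (auto simp: V_def)
  define t where "t = Max V"
  have tV: "t \<in> V" using fV neV by (simp add: t_def)
  have dle: "d j \<le> t" if "j < n" for j using fV that by (auto simp: t_def V_def)
  have finQ: "finite (Q k)" if "k < p" for k using Q that finite_subset by blast
  show ?case
  proof (cases "V - {t} = {}")
    case True
    then have dt: "d j = t" if "j < n" for j using that by (auto simp: V_def)
    have h: "hmax (Q k) d = t" if kp: "k < p" for k
    proof -
      obtain j where "j \<in> Q k" "hmax (Q k) d = d j" using hmax_in[OF finQ[OF kp]] Q kp by blast
      then show ?thesis using dt Q kp by auto
    qed
    have "Gf p n Q mup mum d = (\<Sum>k<p. real (mup k) * t) - (\<Sum>j<n. real (mum j) * t)"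
      unfolding Gf_def using h dt by simp
    also have "\<dots> = real (\<Sum>k<p. mup k) * t - real (\<Sum>j<n. mum j) * t"
      by (simp add: sum_distrib_right)
    also have "\<dots> = 0" using mu by simp
    finally show ?thesis using less.prems by simp
  next
    case False
    define s where "s = Max (V - {t})"
    have sV: "s \<in> V - {t}" unfolding s_def using False fV by (intro Max_in) auto
    have sle: "v \<le> s" if "v \<in> V - {t}" for v using that fV by (simp add: s_def)
    have st: "s < t" using sV dle by (auto simp: V_def le_less)
    define Jt where "Jt = {j. j<n \<and> t \<le> d j}"
    define d' where "d' = (\<lambda>j. d j - (t - s) * chi Jt j)"
    have d'le: "d' j \<le> s" if "j < n" for j
    proof (cases "j \<in> Jt")
      case True then show ?thesis using dle[OF that] by (auto simp: d'_def chi_def Jt_def)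
    next
      case False then have "d j \<in> V - {t}" using that by (auto simp: V_def Jt_def)
      then show ?thesis using sle False by (auto simp: d'_def chi_def)
    qed
    have hid: "hmax (Q k) d = hmax (Q k) d' + (t - s) * hmax (Q k) (chi Jt)" if kp: "k < p" for k
    proof (cases "Q k \<inter> Jt = {}")
      case True
      have "hmax (Q k) d' = hmax (Q k) d" by (rule hmax_cong) (use True in \<open>auto simp: d'_def chi_def\<close>)
      moreover have "hmax (Q k) (chi Jt) = 0"
      proof -
        obtain j where "j \<in> Q k" "hmax (Q k) (chi Jt) = chi Jt j" using hmax_in[OF finQ[OF kp]] Q kp by blast
        then show ?thesis using True by (auto simp: chi_def)
      qed
      ultimately show ?thesis by simp
    next
      case False
      then obtain j where j: "j \<in> Q k" "j \<in> Jt" by blast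
      have jn: "j < n" using j Q kp by auto
      have "hmax (Q k) d = d j"
        by (rule hmax_eqI[OF finQ[OF kp] j(1)]) (use j dle Q kp in \<open>force simp: Jt_def intro: order_trans[OF dle]\<close>)
      moreover have "d j = t" using j jn dle[OF jn] by (auto simp: Jt_def)
      moreover have d'j: "d' j = s" using \<open>d j = t\<close> j(2) by (simp add: d'_def chi_def)
      moreover have "hmax (Q k) d' = d' j"
        by (rule hmax_eqI[OF finQ[OF kp] j(1)]) (use d'j d'le Q kp in force)
      moreover have "hmax (Q k) (chi Jt) = chi Jt j"
        by (rule hmax_eqI[OF finQ[OF kp] j(1)]) (use j in \<open>auto simp: chi_def\<close>)
      ultimately show ?thesis using j by (simp add: d'_def chi_def)
    qed
    have Gd: "Gf p n Q mup mum d = Gf p n Q mup mum d' + (t - s) * Gf p n Q mup mum (chi Jt)"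
      by (rule Gf_decomp) (use hid in \<open>auto simp: d'_def\<close>)
    show ?thesis
    proof (cases "Gf p n Q mup mum (chi Jt) < 0")
      case True
      then show ?thesis using tV by (auto simp: V_def Jt_def)
    next
      case False
      then have "(t - s) * Gf p n Q mup mum (chi Jt) \<ge> 0" using st by simp
      then have G': "Gf p n Q mup mum d' < 0" using Gd less.prems by linarith
      have sub: "d' ` {..<n} \<subseteq> V - {t}"
      proof
        fix v assume "v \<in> d' ` {..<n}"
        then obtain j where j: "j < n" "v = d' j" by auto
        show "v \<in> V - {t}"
        proof (cases "j \<in> Jt")
          case True
          then have "d' j = s" using dle[OF j(1)] by (auto simp: d'_def chi_def Jt_def)
          then show ?thesis using sV j by simp
        next
          case False then show ?thesis using j by (auto simp: V_def Jt_def d'_def chi_def)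
        qed
      qed
      have "card (d' ` {..<n}) \<le> card (V - {t})" using sub fV by (intro card_mono) auto
      also have "\<dots> < card V" using tV fV by (intro psubset_card_mono) auto
      finally have "card (d' ` {..<n}) < card (d ` {..<n})" by (simp add: V_def)
      from less.hyps[OF this G'] obtain t' where t': "t' \<in> d' ` {..<n}"
        "Gf p n Q mup mum (chi {j. j<n \<and> t' \<le> d' j}) < 0" by blast
      have t's: "t' \<le> s" and t'V: "t' \<in> V" using t' sub sle by auto
      have "{j. j<n \<and> t' \<le> d' j} = {j. j<n \<and> t' \<le> d j}"
      proof (intro Collect_cong conj_cong refl)
        fix j assume "j < n"
        show "(t' \<le> d' j) = (t' \<le> d j)"
        proof (cases "j \<in> Jt")
          case True
          then have "d' j = s" "d j = t" using dle[OF \<open>j<n\<close>] by (auto simp: d'_def chi_def Jt_def)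
          then show ?thesis using t's st by simp
        next
          case False then show ?thesis by (simp add: d'_def chi_def)
        qed
      qed
      then show ?thesis using t' t'V by (auto simp: V_def)
    qed
  qed
qed

definition argset :: "nat \<Rightarrow> (nat \<Rightarrow> nat \<Rightarrow> ereal) \<Rightarrow> nat \<Rightarrow> (nat \<Rightarrow> real) \<Rightarrow> nat set" where
  "argset n M i x = {j. j < n \<and> M i j + ereal (x j) = trow n M i x}"

lemma trow_ge: "j < n \<Longrightarrow> M i j + ereal (x j) \<le> trow n M i x"
  unfolding trow_def by (intro Max_ge) auto

lemma trow_in: "n > 0 \<Longrightarrow> \<exists>j<n. trow n M i x = M i j + ereal (x j)"
proof -
  assume "n > 0"
  then have "trow n M i x \<in> (\<lambda>j. M i j + ereal (x j)) ` {..<n}"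
    unfolding trow_def by (intro Max_in) auto
  then show ?thesis by auto
qed

lemma trow_eqI: "(\<forall>j<n. M i j + ereal (z j) \<le> v) \<Longrightarrow> j0 < n \<Longrightarrow> M i j0 + ereal (z j0) = v \<Longrightarrow> trow n M i z = v"
  unfolding trow_def by (intro Max_eqI) auto

lemma argset_props: "n > 0 \<Longrightarrow> argset n M i x \<noteq> {} \<and> argset n M i x \<subseteq> {..<n} \<and> finite (argset n M i x)"
  using trow_in[of n M i x] unfolding argset_def by (auto intro: finite_subset[of _ "{..<n}"])

lemma trow_notP: "\<forall>j<n. M i j \<noteq> PInfty \<Longrightarrow> n > 0 \<Longrightarrow> trow n M i x \<noteq> PInfty"
  using trow_in[of n M i x] by auto

definition rowloc :: "nat \<Rightarrow> (nat \<Rightarrow> nat \<Rightarrow> ereal) \<Rightarrow> nat \<Rightarrow> (nat \<Rightarrow> real) \<Rightarrow> real \<Rightarrow> bool" where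
  "rowloc n M i x e \<longleftrightarrow> (\<forall>z. (\<forall>j<n. \<bar>z j - x j\<bar> < e) \<longrightarrow>
     trow n M i z = trow n M i x + ereal (hmax (argset n M i x) (\<lambda>j. z j - x j)))"

lemma rowloc_mono: "rowloc n M i x e \<Longrightarrow> e' \<le> e \<Longrightarrow> rowloc n M i x e'"
  unfolding rowloc_def by (meson less_le_trans)

lemma row_local:
  assumes n: "n > 0" and fin: "\<forall>j<n. M i j \<noteq> PInfty"
  shows "\<exists>e>0. rowloc n M i x e"
proof (cases "trow n M i x = MInfty")
  case True
  have Mj: "M i j = MInfty" if "j < n" for j
    using trow_ge[OF that, of M i x] True by (cases "M i j") auto
  have "trow n M i z = MInfty" for z
    by (rule trow_eqI[OF _ n]) (use Mj n in auto)
  then show ?thesis using True by (auto simp: rowloc_def intro: exI[of _ 1])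
next
  case False
  then obtain \<tau> where tau: "trow n M i x = ereal \<tau>" using trow_notP[of n M i x] fin n
    by (cases "trow n M i x") auto
  define A where "A = argset n M i x"
  have Ap: "A \<noteq> {}" "A \<subseteq> {..<n}" "finite A" using argset_props[OF n] by (auto simp: A_def)
  define B where "B = {..<n} - A"
  have "\<exists>e>0. \<forall>j\<in>B. (\<forall>z. \<bar>z j - x j\<bar> < e \<longrightarrow> M i j + ereal (z j) < ereal (\<tau> - e))"
  proof (rule fin_min_pos)
    show "finite B" by (simp add: B_def)
    show "\<forall>j e e'. (\<forall>z. \<bar>z j - x j\<bar> < e \<longrightarrow> M i j + ereal (z j) < ereal (\<tau> - e)) \<longrightarrow>
      0 < e' \<longrightarrow> e' \<le> e \<longrightarrow> (\<forall>z. \<bar>z j - x j\<bar> < e' \<longrightarrow> M i j + ereal (z j) < ereal (\<tau> - e'))"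
    proof (intro allI impI)
      fix j e e' z
      assume h: "\<forall>z. \<bar>z j - x j\<bar> < e \<longrightarrow> M i j + ereal (z j) < ereal (\<tau> - e)" "0 < e'" "e' \<le> e"
        "\<bar>z j - x j\<bar> < e'"
      then have "M i j + ereal (z j) < ereal (\<tau> - e)" by auto
      also have "\<dots> \<le> ereal (\<tau> - e')" using h by simp
      finally show "M i j + ereal (z j) < ereal (\<tau> - e')" .
    qed
    show "\<forall>j\<in>B. \<exists>e>0. \<forall>z. \<bar>z j - x j\<bar> < e \<longrightarrow> M i j + ereal (z j) < ereal (\<tau> - e)"
    proof
      fix j assume j: "j \<in> B"
      then have jn: "j < n" and lt: "M i j + ereal (x j) < ereal \<tau>"
        using trow_ge[of j n M i x] tau by (auto simp: B_def A_def argset_def order_le_less)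
      show "\<exists>e>0. \<forall>z. \<bar>z j - x j\<bar> < e \<longrightarrow> M i j + ereal (z j) < ereal (\<tau> - e)"
      proof (cases "M i j")
        case (real a)
        show ?thesis
        proof (rule exI[of _ "(\<tau> - a - x j) / 2"], intro conjI allI impI)
          show "0 < (\<tau> - a - x j) / 2" using lt real by simp
          fix z assume "\<bar>z j - x j\<bar> < (\<tau> - a - x j) / 2"
          then have "z j - x j < (\<tau> - a - x j) / 2" by (metis abs_ge_self le_less_trans)
          then show "M i j + ereal (z j) < ereal (\<tau> - (\<tau> - a - x j) / 2)" using real by (simp add: field_simps)
        qed
      next
        case PInf then show ?thesis using fin jn by auto
      next
        case MInf then show ?thesis by (auto intro: exI[of _ 1])
      qed
    qed
  qed
  then obtain e where e: "e > 0" "\<forall>j\<in>B. \<forall>z. \<bar>z j - x j\<bar> < e \<longrightarrow> M i j + ereal (z j) < ereal (\<tau> - e)"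
    by blast
  have "rowloc n M i x e"
    unfolding rowloc_def
  proof (intro allI impI)
    fix z assume z: "\<forall>j<n. \<bar>z j - x j\<bar> < e"
    define h where "h = hmax A (\<lambda>j. z j - x j)"
    have hb: "\<bar>h\<bar> < e" unfolding h_def by (rule hmax_bound[OF Ap(3,1)]) (use z Ap(2) in auto)
    obtain j0 where j0: "j0 \<in> A" "h = z j0 - x j0" using hmax_in[OF Ap(3,1)] h_def by blast
    have MA: "M i j = ereal (\<tau> - x j)" if "j \<in> A" for j
      using that tau by (cases "M i j") (auto simp: A_def argset_def)
    have "trow n M i z = ereal (\<tau> + h)"
    proof (rule trow_eqI)
      show "j0 < n" using j0 Ap by auto
      show "M i j0 + ereal (z j0) = ereal (\<tau> + h)" using MA[OF j0(1)] j0 by simp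
      show "\<forall>j<n. M i j + ereal (z j) \<le> ereal (\<tau> + h)"
      proof (intro allI impI)
        fix j assume jn: "j < n"
        show "M i j + ereal (z j) \<le> ereal (\<tau> + h)"
        proof (cases "j \<in> A")
          case True
          have "z j - x j \<le> h" unfolding h_def by (rule hmax_ge[OF Ap(3) True])
          then show ?thesis using MA[OF True] by simp
        next
          case False
          then have "M i j + ereal (z j) < ereal (\<tau> - e)" using e z jn by (auto simp: B_def)
          also have "\<dots> \<le> ereal (\<tau> + h)" using hb by simp
          finally show ?thesis by simp
        qed
      qed
    qed
    then show "trow n M i z = trow n M i x + ereal (hmax (argset n M i x) (\<lambda>j. z j - x j))"
      using tau by (simp add: h_def A_def)
  qed
  then show ?thesis using e by blast
qed

lemma Gf_scale:
  assumes "\<forall>k<p. Q k \<noteq> {} \<and> finite (Q k)" "0 \<le> c"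
  shows "Gf p n Q mup mum (\<lambda>j. c * e j) = c * Gf p n Q mup mum e"
proof -
  have "(\<Sum>k<p. real (mup k) * hmax (Q k) (\<lambda>j. c * e j)) = (\<Sum>k<p. c * (real (mup k) * hmax (Q k) e))"
    by (rule sum.cong) (use assms hmax_scale in auto)
  then show ?thesis unfolding Gf_def
    by (simp add: sum_distrib_left[symmetric] right_diff_distrib mult.left_commute)
qed

theorem theorem1p1:
  fixes m n p :: nat
    and Ap Am C :: "nat \<Rightarrow> nat \<Rightarrow> ereal"
    and mup mum :: "nat \<Rightarrow> nat"
    and x :: "nat \<Rightarrow> real"
  assumes Ap_Rmax: "\<forall>i<m. \<forall>j<n. in_Rmax (Ap i j)"
    and Am_Rmax: "\<forall>i<m. \<forall>j<n. in_Rmax (Am i j)"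
    and C_Rmax: "\<forall>k<p. \<forall>j<n. in_Rmax (C k j)"
    and A_rows: "\<forall>i<m. \<exists>j<n. Amax Ap Am i j \<noteq> MInfty"
    and C_rows: "\<forall>k<p. \<exists>j<n. C k j \<noteq> MInfty"
    and mu_sum: "(\<Sum>k<p. mup k) = (\<Sum>j<n. mum j)"
    and conn: "graph_connected m n p C (Amax Ap Am)"
    and xS: "inS m n Ap Am x"
    and notopt: "\<not> local_opt m n p Ap Am C mup mum x"
  shows "\<exists>J\<subseteq>{..<n}. \<exists>\<delta>'>0. \<forall>\<delta>. 0 < \<delta> \<and> \<delta> < \<delta>' \<longrightarrow>
           inS m n Ap Am (\<lambda>j. x j + \<delta> * chi J j) \<and>
           fobj p n C mup mum (\<lambda>j. x j + \<delta> * chi J j) < fobj p n C mup mum x"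
proof -
  have n0: "n > 0"
  proof (rule ccontr)
    assume "\<not> n > 0"
    then have n: "n = 0" by simp
    then have p: "p = 0" using C_rows by (cases p) auto
    have "local_opt m n p Ap Am C mup mum x" unfolding local_opt_def fobj_def using n p
      by (auto intro: exI[of _ 1])
    with notopt show False by simp
  qed
  have ApF: "\<forall>j<n. Ap i j \<noteq> PInfty" if "i < m" for i using Ap_Rmax that by (auto simp: in_Rmax_def)
  have AmF: "\<forall>j<n. Am i j \<noteq> PInfty" if "i < m" for i using Am_Rmax that by (auto simp: in_Rmax_def)
  have CF: "\<forall>j<n. C k j \<noteq> PInfty" if "k < p" for k using C_Rmax that by (auto simp: in_Rmax_def)
  define Ck where "Ck k = argset n C k x" for k
  define P where "P i = argset n Ap i x" for i
  define M where "M i = argset n Am i x" for i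
  note arg = argset_props[OF n0]
  obtain e1 where e1: "e1 > 0" "\<forall>k\<in>{..<p}. rowloc n C k x e1"
  proof -
    have "\<exists>e>0. \<forall>k\<in>{..<p}. rowloc n C k x e"
      by (rule fin_min_pos) (use row_local[OF n0] CF rowloc_mono in auto)
    then show ?thesis using that by blast
  qed
  define slk where "slk i e \<longleftrightarrow> (trow n Am i x = MInfty \<or> trow n Ap i x = trow n Am i x \<or>
      (\<exists>a b. trow n Ap i x = ereal a \<and> trow n Am i x = ereal b \<and> b + e < a - e))" for i e
  have slk_mono: "slk i e'" if "slk i e" "e' \<le> e" for i e e'
  proof -
    have "b + e' < a - e'" if "b + e < a - e" for a b using that \<open>e' \<le> e\<close> by linarith
    then show ?thesis using \<open>slk i e\<close> unfolding slk_def by blast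
  qed
  have slk_ex: "\<exists>e>0. slk i e" if im: "i < m" for i
  proof (cases "trow n Am i x = MInfty \<or> trow n Ap i x = trow n Am i x")
    case True then show ?thesis by (auto simp: slk_def intro: exI[of _ 1])
  next
    case False
    have ge: "trow n Am i x \<le> trow n Ap i x" using xS im by (auto simp: inS_def)
    obtain b where b: "trow n Am i x = ereal b" using False trow_notP[of n Am i x] AmF[OF im] n0
      by (cases "trow n Am i x") auto
    obtain a where a: "trow n Ap i x = ereal a" using False trow_notP[of n Ap i x] ApF[OF im] n0 ge b
      by (cases "trow n Ap i x") auto
    have "b < a" using a b ge False by auto
    then show ?thesis using a b by (auto simp: slk_def field_simps intro!: exI[of _ "(a - b) / 4"])
  qed
  obtain e2 where e2: "e2 > 0" "\<forall>i\<in>{..<m}. rowloc n Ap i x e2 \<and> rowloc n Am i x e2 \<and> slk i e2"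
  proof -
    have "\<exists>e>0. \<forall>i\<in>{..<m}. rowloc n Ap i x e \<and> rowloc n Am i x e \<and> slk i e"
    proof (rule fin_min_pos)
      show "finite {..<m}" by simp
      show "\<forall>i\<in>{..<m}. \<exists>e>0. rowloc n Ap i x e \<and> rowloc n Am i x e \<and> slk i e"
      proof
        fix i assume "i \<in> {..<m}"
        then have im: "i < m" by simp
        obtain a1 where "a1 > 0" "rowloc n Ap i x a1" using row_local[where M=Ap and i=i and x=x, OF n0 ApF[OF im]] by blast
        moreover obtain a2 where "a2 > 0" "rowloc n Am i x a2" using row_local[where M=Am and i=i and x=x, OF n0 AmF[OF im]] by blast
        moreover obtain a3 where "a3 > 0" "slk i a3" using slk_ex[OF im] by blast
        ultimately show "\<exists>e>0. rowloc n Ap i x e \<and> rowloc n Am i x e \<and> slk i e"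
          by (intro exI[of _ "min a1 (min a2 a3)"])
            (meson min.cobounded1 min.cobounded2 min_less_iff_conj order_trans rowloc_mono slk_mono)
      qed
      show "\<forall>j e e'. rowloc n Ap j x e \<and> rowloc n Am j x e \<and> slk j e \<longrightarrow> 0 < e' \<longrightarrow> e' \<le> e \<longrightarrow>
          rowloc n Ap j x e' \<and> rowloc n Am j x e' \<and> slk j e'"
        by (meson rowloc_mono slk_mono)
    qed
    then show ?thesis using that by blast
  qed
  define \<epsilon> where "\<epsilon> = min e1 e2"
  have eps: "\<epsilon> > 0" "\<epsilon> \<le> e1" "\<epsilon> \<le> e2" using e1 e2 by (auto simp: \<epsilon>_def)
  have tCx: "trow n C k x \<noteq> MInfty \<and> trow n C k x \<noteq> PInfty" if kp: "k < p" for k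
  proof -
    obtain j where j: "j < n" "C k j \<noteq> MInfty" using C_rows kp by blast
    have "C k j + ereal (x j) \<le> trow n C k x" by (rule trow_ge[OF j(1)])
    moreover have "C k j + ereal (x j) \<noteq> MInfty" using j(2) by (cases "C k j") auto
    ultimately have "trow n C k x \<noteq> MInfty" by auto
    then show ?thesis using trow_notP[of n C k x] CF[OF kp] n0 by auto
  qed
  define tC where "tC k = real_of_ereal (trow n C k x)" for k
  have tCe: "trow n C k x = ereal (tC k)" if "k < p" for k
    using tCx[OF that] unfolding tC_def by (cases "trow n C k x") auto
  have fobjz: "fobj p n C mup mum z = ereal ((\<Sum>k<p. real (mup k) * (tC k + hmax (Ck k) (\<lambda>j. z j - x j)))
      - (\<Sum>j<n. real (mum j) * z j))" if z: "\<forall>j<n. \<bar>z j - x j\<bar> < \<epsilon>" for z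
  proof -
    have "trow n C k z = ereal (tC k + hmax (Ck k) (\<lambda>j. z j - x j))" if kp: "k < p" for k
    proof -
      have "rowloc n C k x e1" using e1 kp by auto
      moreover have "\<forall>j<n. \<bar>z j - x j\<bar> < e1" using z eps(2) by (meson less_le_trans)
      ultimately have "trow n C k z = trow n C k x + ereal (hmax (Ck k) (\<lambda>j. z j - x j))"
        unfolding rowloc_def Ck_def by blast
      then show ?thesis using tCe[OF kp] by simp
    qed
    then have "(\<Sum>k<p. ereal (real (mup k)) * trow n C k z) =
        (\<Sum>k<p. ereal (real (mup k) * (tC k + hmax (Ck k) (\<lambda>j. z j - x j))))"
      by (intro sum.cong) auto
    then show ?thesis unfolding fobj_def by simp
  qed
  have fobjx: "fobj p n C mup mum x = ereal ((\<Sum>k<p. real (mup k) * tC k) - (\<Sum>j<n. real (mum j) * x j))"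
  proof -
    have "(\<Sum>k<p. ereal (real (mup k)) * trow n C k x) = (\<Sum>k<p. ereal (real (mup k) * tC k))"
      by (intro sum.cong) (auto simp: tCe)
    then show ?thesis unfolding fobj_def by simp
  qed
  have fless: "fobj p n C mup mum z < fobj p n C mup mum x \<longleftrightarrow> Gf p n Ck mup mum (\<lambda>j. z j - x j) < 0"
    if z: "\<forall>j<n. \<bar>z j - x j\<bar> < \<epsilon>" for z
  proof -
    have "(\<Sum>k<p. real (mup k) * (tC k + hmax (Ck k) (\<lambda>j. z j - x j))) =
        (\<Sum>k<p. real (mup k) * tC k) + (\<Sum>k<p. real (mup k) * hmax (Ck k) (\<lambda>j. z j - x j))"
      by (simp add: distrib_left sum.distrib)
    moreover have "(\<Sum>j<n. real (mum j) * (z j - x j)) = (\<Sum>j<n. real (mum j) * z j) - (\<Sum>j<n. real (mum j) * x j)"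
      by (simp add: right_diff_distrib sum_subtractf)
    ultimately show ?thesis unfolding fobjz[OF z] fobjx Gf_def by auto
  qed
  define tight where "tight i \<longleftrightarrow> trow n Ap i x = trow n Am i x \<and> trow n Am i x \<noteq> MInfty" for i
  obtain y where y: "inS m n Ap Am y" "\<forall>j<n. \<bar>x j - y j\<bar> < \<epsilon>" "\<not> fobj p n C mup mum x \<le> fobj p n C mup mum y"
    using notopt eps(1) unfolding local_opt_def by blast
  define d where "d = (\<lambda>j. y j - x j)"
  have yn: "\<forall>j<n. \<bar>y j - x j\<bar> < \<epsilon>" using y(2) by (simp add: abs_minus_commute)
  have Gd: "Gf p n Ck mup mum d < 0" using fless[OF yn] y(3) by (simp add: d_def not_le)
  have Qok: "\<forall>k<p. Ck k \<noteq> {} \<and> Ck k \<subseteq> {..<n}" using arg by (simp add: Ck_def)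
  obtain t where t: "t \<in> d ` {..<n}" "Gf p n Ck mup mum (chi {j. j<n \<and> t \<le> d j}) < 0"
    using level_lemma[OF Qok mu_sum n0 Gd] by blast
  define J where "J = {j. j<n \<and> t \<le> d j}"
  have tightd: "hmax (M i) d \<le> hmax (P i) d" if im: "i < m" and ti: "tight i" for i
  proof -
    have le: "trow n Am i y \<le> trow n Ap i y" using y(1) im by (auto simp: inS_def)
    have "rowloc n Ap i x \<epsilon>" "rowloc n Am i x \<epsilon>" using e2(2) im eps(3) by (meson lessThan_iff rowloc_mono)+
    then have "trow n Ap i y = trow n Ap i x + ereal (hmax (P i) d)"
      "trow n Am i y = trow n Am i x + ereal (hmax (M i) d)"
      unfolding rowloc_def P_def M_def d_def using yn by auto
    moreover obtain \<tau> where "trow n Am i x = ereal \<tau>" using ti trow_notP[of n Am i x] AmF[OF im] n0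
      by (cases "trow n Am i x") (auto simp: tight_def)
    ultimately show ?thesis using le ti by (simp add: tight_def)
  qed
  have tightJ: "hmax (M i) (chi J) \<le> hmax (P i) (chi J)" if im: "i < m" and ti: "tight i" for i
    using tightd[OF im ti] arg unfolding J_def M_def P_def
    by (simp add: chi_thresh)
  show ?thesis
  proof (intro exI[of _ J] conjI exI[of _ \<epsilon>] allI impI)
    show "J \<subseteq> {..<n}" by (auto simp: J_def)
    show "0 < \<epsilon>" by (rule eps(1))
    fix \<delta> assume \<delta>: "0 < \<delta> \<and> \<delta> < \<epsilon>"
    define z where "z = (\<lambda>j. x j + \<delta> * chi J j)"
    have zx: "(\<lambda>j. z j - x j) = (\<lambda>j. \<delta> * chi J j)" by (simp add: z_def)
    have zn: "\<forall>j<n. \<bar>z j - x j\<bar> < \<epsilon>" using \<delta> by (auto simp: z_def chi_def)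
    have hm: "hmax (argset n Mx i x) (\<lambda>j. \<delta> * chi J j) = \<delta> * hmax (argset n Mx i x) (chi J)" for Mx i
      using hmax_scale[of "argset n Mx i x" \<delta> "chi J"] arg \<delta> by simp
    have "inS m n Ap Am z" unfolding inS_def
    proof (intro allI impI)
      fix i assume im: "i < m"
      have "rowloc n Ap i x \<epsilon>" "rowloc n Am i x \<epsilon>" using e2(2) im eps(3) by (meson lessThan_iff rowloc_mono)+
      then have rP: "trow n Ap i z = trow n Ap i x + ereal (\<delta> * hmax (P i) (chi J))"
        and rM: "trow n Am i z = trow n Am i x + ereal (\<delta> * hmax (M i) (chi J))"
        unfolding rowloc_def P_def M_def using zn zx hm by auto
      have sl: "slk i e2" using e2 im by auto
      show "trow n Am i z \<le> trow n Ap i z"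
      proof (cases "trow n Am i x = MInfty")
        case True then show ?thesis using rM by simp
      next
        case notM: False
        show ?thesis
        proof (cases "trow n Ap i x = trow n Am i x")
          case True
          then have ti: "tight i" using notM by (simp add: tight_def)
          obtain \<tau> where tau: "trow n Am i x = ereal \<tau>" using notM trow_notP[of n Am i x] AmF[OF im] n0
            by (cases "trow n Am i x") auto
          have "\<delta> * hmax (M i) (chi J) \<le> \<delta> * hmax (P i) (chi J)"
            using tightJ[OF im ti] \<delta> by (simp add: mult_left_mono)
          then show ?thesis using rP rM True tau by simp
        next
          case False
          then obtain a b where ab: "trow n Ap i x = ereal a" "trow n Am i x = ereal b" "b + e2 < a - e2"
            using sl notM by (auto simp: slk_def)
          have "\<bar>hmax (P i) (\<lambda>j. z j - x j)\<bar> < \<epsilon>" "\<bar>hmax (M i) (\<lambda>j. z j - x j)\<bar> < \<epsilon>"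
            using hmax_bound arg zn unfolding P_def M_def by (meson lessThan_iff subsetD)+
          then have "\<bar>\<delta> * hmax (P i) (chi J)\<bar> < \<epsilon>" "\<bar>\<delta> * hmax (M i) (chi J)\<bar> < \<epsilon>"
            using zx hm unfolding P_def M_def by auto
          then show ?thesis using rP rM ab eps by (simp add: abs_less_iff)
        qed
      qed
    qed
    moreover have "fobj p n C mup mum z < fobj p n C mup mum x"
    proof -
      have "Gf p n Ck mup mum (\<lambda>j. \<delta> * chi J j) = \<delta> * Gf p n Ck mup mum (chi J)"
        by (rule Gf_scale) (use arg \<delta> in \<open>auto simp: Ck_def\<close>)
      also have "\<dots> < 0" using t(2) \<delta> by (simp add: J_def mult_pos_neg)
      finally show ?thesis using fless[OF zn] zx by simp
    qed
    ultimately show "inS m n Ap Am (\<lambda>j. x j + \<delta> * chi J j)"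
      "fobj p n C mup mum (\<lambda>j. x j + \<delta> * chi J j) < fobj p n C mup mum x"
      by (simp_all add: z_def)
  qed
qed

end
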